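(* Let $k$ be a positive integer and $n = 2k^2+2$. Construct a $k$-regular bipartite graph $G$ on $n$ vertices as follows: take two vertices $x$ and $y$ and add $k$ distinct (vertex-disjoint apart from $x,y$) $k$-resistors between $x$ and $y$. Then a.a.s. (as $k\to\infty$) the random subgraph $G(p)$ does not contain a perfect matching for any $p = o(n^{-1/4})$. On the other hand, a.a.s. $G(p)$ contains no isolated vertices for any $p = \omega(\log n/\sqrt n)$.
   Context: A $k$-resistor between two vertices $x$ and $y$ is the bipartite graph with vertex set $\{x,y\}\dot\cup X'\dot\cup Y'$, where $|X'|=|Y'|=k$, with designated vertices $x'\in X'$, $y'\in Y'$, and edge set $\{xx',yy'\}\cup(\{ab : a\in X', b\in Y'\}\setminus\{x'y'\})$. $G(p)$ retains each edge of $G$ independently with probability $p$. "A.a.s." means with probability tending to $1$. *)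

theory Defs
  imports "HOL-Probability.Probability" "HOL-Library.Landau_Symbols"
begin

datatype rvtx = VX | VY | VA nat nat | VB nat nat
  \<comment> \<open>VA i a: vertex a of the side X' of the i-th resistor (VA i 0 = x');
      VB i b: vertex b of the side Y' of the i-th resistor (VB i 0 = y')\<close>

definition resistor_verts :: "nat \<Rightarrow> nat \<Rightarrow> rvtx set" where
  "resistor_verts k i = {VA i a | a. a < k} \<union> {VB i b | b. b < k}"

definition resistor_edges :: "nat \<Rightarrow> nat \<Rightarrow> rvtx set set" where
  "resistor_edges k i = {{VX, VA i 0}, {VY, VB i 0}} \<union>
     {{VA i a, VB i b} | a b. a < k \<and> b < k \<and> (a, b) \<noteq> (0, 0)}"

definition G_verts :: "nat \<Rightarrow> rvtx set" where
  "G_verts k = {VX, VY} \<union> (\<Union>i<k. resistor_verts k i)"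

definition G_edges :: "nat \<Rightarrow> rvtx set set" where
  "G_edges k = (\<Union>i<k. resistor_edges k i)"

definition random_subgraph :: "'a set set \<Rightarrow> real \<Rightarrow> 'a set set pmf" where
  "random_subgraph E p =
     map_pmf (\<lambda>f. {e \<in> E. f e}) (Pi_pmf E False (\<lambda>_. bernoulli_pmf p))"

definition has_perfect_matching :: "'a set \<Rightarrow> 'a set set \<Rightarrow> bool" where
  "has_perfect_matching V H \<longleftrightarrow>
     (\<exists>M \<subseteq> H. (\<forall>e\<in>M. \<forall>e'\<in>M. e \<noteq> e' \<longrightarrow> e \<inter> e' = {}) \<and> \<Union>M = V)"

definition has_isolated_vertex :: "'a set \<Rightarrow> 'a set set \<Rightarrow> bool" where
  "has_isolated_vertex V H \<longleftrightarrow> (\<exists>v\<in>V. \<forall>e\<in>H. v \<notin> e)"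

end

theory Submission
  imports Defs
begin


lemma finite_resistor_edges: "finite (resistor_edges k i)"
proof -
  have "resistor_edges k i \<subseteq> {{VX, VA i 0}, {VY, VB i 0}} \<union> (\<lambda>(a,b). {VA i a, VB i b}) ` ({..<k}\<times>{..<k})"
    unfolding resistor_edges_def by auto
  then show ?thesis by (rule finite_subset) auto
qed

lemma finite_G_edges: "finite (G_edges k)"
  unfolding G_edges_def using finite_resistor_edges by auto

lemma card_G_verts: "real (card (G_verts k)) \<le> 2 * real k ^ 2 + 2"
proof -
  have sub: "G_verts k \<subseteq> {VX,VY} \<union> (\<lambda>(i,a). VA i a) ` ({..<k}\<times>{..<k}) \<union> (\<lambda>(i,a). VB i a) ` ({..<k}\<times>{..<k})"
    unfolding G_verts_def resistor_verts_def by auto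
  have "card (G_verts k) \<le> card ({VX,VY} \<union> (\<lambda>(i,a). VA i a) ` ({..<k}\<times>{..<k}) \<union> (\<lambda>(i,a). VB i a) ` ({..<k}\<times>{..<k}))"
    by (rule card_mono[OF _ sub]) auto
  also have "\<dots> \<le> card ({VX,VY} \<union> (\<lambda>(i,a). VA i a) ` ({..<k}\<times>{..<k})) + card ((\<lambda>(i,a). VB i a) ` ({..<k}\<times>{..<k}))"
    by (rule card_Un_le)
  also have "\<dots> \<le> card ({VX,VY}::rvtx set) + card ((\<lambda>(i,a). VA i a) ` ({..<k}\<times>{..<k})) + card ((\<lambda>(i,a). VB i a) ` ({..<k}\<times>{..<k}))"
    by (rule add_right_mono[OF card_Un_le])
  also have "\<dots> \<le> 2 + k*k + k*k"
    using card_image_le[of "{..<k}\<times>{..<k}" "(\<lambda>(i,a). VA i a)"]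
          card_image_le[of "{..<k}\<times>{..<k}" "(\<lambda>(i,a). VB i a)"]
    by (simp add: card_cartesian_product)
  finally have "card (G_verts k) \<le> 2 + k*k + k*k" .
  then have "real (card (G_verts k)) \<le> real (2 + k*k + k*k)" by linarith
  then show ?thesis by (simp add: power2_eq_square)
qed

lemma incident:
  assumes "v \<in> G_verts k"
  shows "\<exists>S. S \<subseteq> G_edges k \<and> card S = k \<and> (\<forall>e\<in>S. v \<in> e)"
proof -
  consider "v = VX" | "v = VY" | i a where "v = VA i a" "i < k" "a < k"
    | i b where "v = VB i b" "i < k" "b < k"
    using assms unfolding G_verts_def resistor_verts_def by auto
  then show ?thesis
  proof cases
    case 1
    show ?thesis
      apply (rule exI[of _ "(\<lambda>i. {VX, VA i 0}) ` {..<k}"])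
      apply (subst card_image)
      by (auto simp: inj_on_def doubleton_eq_iff 1 G_edges_def resistor_edges_def)
  next
    case 2
    show ?thesis
      apply (rule exI[of _ "(\<lambda>i. {VY, VB i 0}) ` {..<k}"])
      apply (subst card_image)
      by (auto simp: inj_on_def doubleton_eq_iff 2 G_edges_def resistor_edges_def)
  next
    case 3
    show ?thesis
      apply (rule exI[of _ "(\<lambda>b. if a=0 \<and> b=0 then {VX, VA i 0} else {VA i a, VB i b}) ` {..<k}"])
      apply (subst card_image)
      using 3 by (auto simp: inj_on_def doubleton_eq_iff G_edges_def resistor_edges_def split: if_splits)
  next
    case 4
    show ?thesis
      apply (rule exI[of _ "(\<lambda>a. if a=0 \<and> b=0 then {VY, VB i 0} else {VA i a, VB i b}) ` {..<k}"])
      apply (subst card_image)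
      using 4 by (auto simp: inj_on_def doubleton_eq_iff G_edges_def resistor_edges_def split: if_splits)
  qed
qed

lemma G_edges_cases:
  assumes "e \<in> G_edges k"
  obtains i where "i < k" "e = {VX, VA i 0}"
  | i where "i < k" "e = {VY, VB i 0}"
  | i a b where "i < k" "a < k" "b < k" "(a,b) \<noteq> (0,0)" "e = {VA i a, VB i b}"
  using assms unfolding G_edges_def resistor_edges_def by blast

lemma pm_needs:
  assumes pm: "has_perfect_matching (G_verts k) H" and HE: "H \<subseteq> G_edges k"
  shows "\<exists>i<k. {VX, VA i 0} \<in> H \<and> {VY, VB i 0} \<in> H"
proof -
  obtain M where MH: "M \<subseteq> H" and disj0: "\<forall>e\<in>M. \<forall>e'\<in>M. e \<noteq> e' \<longrightarrow> e \<inter> e' = {}"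
    and cov: "\<Union>M = G_verts k"
    using pm unfolding has_perfect_matching_def by auto
  have disj: "\<And>e e'. e\<in>M \<Longrightarrow> e'\<in>M \<Longrightarrow> e \<noteq> e' \<Longrightarrow> e \<inter> e' = {}"
    using disj0 by blast
  have ME: "M \<subseteq> G_edges k" using MH HE by blast
  have "VX \<in> \<Union>M" using cov unfolding G_verts_def by auto
  then obtain ex where ex: "ex \<in> M" "VX \<in> ex" by blast
  have "ex \<in> G_edges k" using ME ex by blast
  then obtain i where i: "i < k" "ex = {VX, VA i 0}"
    by (cases rule: G_edges_cases) (use ex in auto)
  have "VY \<in> \<Union>M" using cov unfolding G_verts_def by auto
  then obtain ey where ey: "ey \<in> M" "VY \<in> ey" by blast
  have "ey \<in> G_edges k" using ME ey by blast
  then obtain j where j: "j < k" "ey = {VY, VB j 0}"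
    by (cases rule: G_edges_cases) (use ey in auto)
  show ?thesis
  proof (cases "i = j")
    case True
    have "{VX, VA i 0} \<in> H" "{VY, VB i 0} \<in> H" using i j ex ey MH True by auto
    then show ?thesis using i by blast
  next
    case False
    have "\<forall>b<k. \<exists>a. 0 < a \<and> a < k \<and> {VA i a, VB i b} \<in> M"
    proof (intro allI impI)
      fix b assume b: "b < k"
      have "VB i b \<in> \<Union>M" using cov b i unfolding G_verts_def resistor_verts_def by auto
      then obtain e where e: "e \<in> M" "VB i b \<in> e" by blast
      from ME e(1) have "e \<in> G_edges k" by blast
      then show "\<exists>a. 0 < a \<and> a < k \<and> {VA i a, VB i b} \<in> M"
      proof (cases rule: G_edges_cases)
        case (1 i') then show ?thesis using e by auto
      next
        case (2 i')
        then have "e \<noteq> ey" using e j False by (auto simp: doubleton_eq_iff)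
        then have "e \<inter> ey = {}" using disj e ey by blast
        then show ?thesis using 2 ey by auto
      next
        case (3 i' a b')
        then have ii: "i' = i" "b' = b" using e by auto
        show ?thesis
        proof (cases "a = 0")
          case True
          then have "e \<noteq> ex" using 3 i by (auto simp: doubleton_eq_iff)
          then have "e \<inter> ex = {}" using disj e ex by blast
          then show ?thesis using 3 i True ii by auto
        next
          case False
          then show ?thesis using 3 ii e by auto
        qed
      qed
    qed
    then obtain g where g: "\<And>b. b < k \<Longrightarrow> 0 < g b \<and> g b < k \<and> {VA i (g b), VB i b} \<in> M"
      by metis
    have inj: "inj_on g {..<k}"
    proof (rule inj_onI)
      fix b b' assume bb: "b \<in> {..<k}" "b' \<in> {..<k}" "g b = g b'"
      show "b = b'"
      proof (rule ccontr)
        assume "b \<noteq> b'"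
        then have "{VA i (g b), VB i b} \<noteq> {VA i (g b'), VB i b'}" by (auto simp: doubleton_eq_iff)
        then have "{VA i (g b), VB i b} \<inter> {VA i (g b'), VB i b'} = {}"
          using disj[OF g[THEN conjunct2, THEN conjunct2] g[THEN conjunct2, THEN conjunct2]] bb by auto
        then show False using bb by auto
      qed
    qed
    have "g ` {..<k} \<subseteq> {1..<k}" using g by (auto simp: Suc_le_eq)
    then have "card {..<k} \<le> card {1..<k::nat}"
      by (intro card_inj_on_le[OF inj]) auto
    then show ?thesis using i by simp
  qed
qed

lemma prob_const:
  assumes "finite E" "S \<subseteq> E" "0 \<le> p" "p \<le> 1"
  shows "measure_pmf.prob (Pi_pmf E False (\<lambda>_. bernoulli_pmf p)) {f. \<forall>e\<in>S. f e = b}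
         = (if b then p else 1 - p) ^ card S"
proof -
  have eq: "{f. \<forall>e\<in>S. f e = b} = Pi E (\<lambda>e. if e \<in> S then {b} else UNIV)"
    using assms(2) by (auto simp: Pi_def)
  have "measure_pmf.prob (Pi_pmf E False (\<lambda>_. bernoulli_pmf p)) {f. \<forall>e\<in>S. f e = b}
      = (\<Prod>e\<in>E. measure_pmf.prob (bernoulli_pmf p) (if e \<in> S then {b} else UNIV))"
    unfolding eq by (rule measure_Pi_pmf_Pi[OF assms(1)])
  also have "\<dots> = (\<Prod>e\<in>E. if e \<in> S then (if b then p else 1 - p) else 1)"
    using assms by (intro prod.cong) (auto simp: measure_pmf_single)
  also have "\<dots> = (if b then p else 1 - p) ^ card S"
    using assms by (simp add: prod.If_cases Int_absorb1)
  finally show ?thesis .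
qed


lemma finite_G_verts: "finite (G_verts k)"
proof -
  have sub: "G_verts k \<subseteq> {VX,VY} \<union> (\<lambda>(i,a). VA i a) ` ({..<k}\<times>{..<k}) \<union> (\<lambda>(i,a). VB i a) ` ({..<k}\<times>{..<k})"
    unfolding G_verts_def resistor_verts_def by auto
  show ?thesis by (rule finite_subset[OF sub]) auto
qed

lemma pm_bound:
  assumes "0 \<le> p" "p \<le> 1"
  shows "measure_pmf.prob (random_subgraph (G_edges k) p) {H. has_perfect_matching (G_verts k) H}
         \<le> real k * p^2"
proof -
  let ?P = "Pi_pmf (G_edges k) False (\<lambda>_. bernoulli_pmf p)"
  let ?A = "\<lambda>i. {f. \<forall>e\<in>{{VX, VA i 0}, {VY, VB i 0}}. f e = True}"
  have sub: "(\<lambda>f. {e \<in> G_edges k. f e}) -` {H. has_perfect_matching (G_verts k) H} \<subseteq> (\<Union>i\<in>{..<k}. ?A i)"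
  proof
    fix f assume "f \<in> (\<lambda>f. {e \<in> G_edges k. f e}) -` {H. has_perfect_matching (G_verts k) H}"
    then have "has_perfect_matching (G_verts k) {e \<in> G_edges k. f e}" by simp
    from pm_needs[OF this] obtain i where "i < k" "{VX, VA i 0} \<in> {e \<in> G_edges k. f e}"
      "{VY, VB i 0} \<in> {e \<in> G_edges k. f e}" by blast
    then show "f \<in> (\<Union>i\<in>{..<k}. ?A i)" by auto
  qed
  have "measure_pmf.prob (random_subgraph (G_edges k) p) {H. has_perfect_matching (G_verts k) H}
      = measure_pmf.prob ?P ((\<lambda>f. {e \<in> G_edges k. f e}) -` {H. has_perfect_matching (G_verts k) H})"
    unfolding random_subgraph_def by (simp add: measure_map_pmf)
  also have "\<dots> \<le> measure_pmf.prob ?P (\<Union>i\<in>{..<k}. ?A i)"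
    by (rule measure_pmf.finite_measure_mono[OF sub]) simp
  also have "\<dots> \<le> (\<Sum>i\<in>{..<k}. measure_pmf.prob ?P (?A i))"
    by (rule measure_pmf.finite_measure_subadditive_finite) auto
  also have "\<dots> = (\<Sum>i\<in>{..<k}. p^2)"
  proof (rule sum.cong[OF refl])
    fix i assume i: "i \<in> {..<k}"
    have "{{VX, VA i 0}, {VY, VB i 0}} \<subseteq> G_edges k"
      using i unfolding G_edges_def resistor_edges_def by auto
    moreover have "card {{VX, VA i 0}, {VY, VB i 0}} = 2"
      by (simp add: doubleton_eq_iff)
    ultimately show "measure_pmf.prob ?P (?A i) = p^2"
      using prob_const[OF finite_G_edges _ assms, of "{{VX, VA i 0}, {VY, VB i 0}}" k True] by simp
  qed
  also have "\<dots> = real k * p^2" by simp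
  finally show ?thesis .
qed

lemma iso_bound:
  assumes "0 \<le> p" "p \<le> 1"
  shows "measure_pmf.prob (random_subgraph (G_edges k) p) {H. has_isolated_vertex (G_verts k) H}
         \<le> real (card (G_verts k)) * (1 - p)^k"
proof -
  let ?P = "Pi_pmf (G_edges k) False (\<lambda>_. bernoulli_pmf p)"
  have "\<forall>v\<in>G_verts k. \<exists>S. S \<subseteq> G_edges k \<and> card S = k \<and> (\<forall>e\<in>S. v \<in> e)"
    using incident by blast
  then obtain S where S0: "\<forall>v\<in>G_verts k. S v \<subseteq> G_edges k \<and> card (S v) = k \<and> (\<forall>e\<in>S v. v \<in> e)"
    by (auto dest!: bchoice)
  have S: "\<And>v. v \<in> G_verts k \<Longrightarrow> S v \<subseteq> G_edges k \<and> card (S v) = k \<and> (\<forall>e\<in>S v. v \<in> e)"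
    using S0 by blast
  let ?A = "\<lambda>v. {f. \<forall>e\<in>S v. f e = False}"
  have sub: "(\<lambda>f. {e \<in> G_edges k. f e}) -` {H. has_isolated_vertex (G_verts k) H} \<subseteq> (\<Union>v\<in>G_verts k. ?A v)"
  proof
    fix f assume "f \<in> (\<lambda>f. {e \<in> G_edges k. f e}) -` {H. has_isolated_vertex (G_verts k) H}"
    then obtain v where v: "v \<in> G_verts k" "\<forall>e\<in>{e \<in> G_edges k. f e}. v \<notin> e"
      unfolding has_isolated_vertex_def by auto
    have "f \<in> ?A v"
    proof (clarsimp)
      fix e assume e: "e \<in> S v" "f e"
      then have "e \<in> G_edges k" "v \<in> e" using S[OF v(1)] by auto
      then show False using v(2) e by auto
    qed
    then show "f \<in> (\<Union>v\<in>G_verts k. ?A v)" using v(1) by blast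
  qed
  have "measure_pmf.prob (random_subgraph (G_edges k) p) {H. has_isolated_vertex (G_verts k) H}
      = measure_pmf.prob ?P ((\<lambda>f. {e \<in> G_edges k. f e}) -` {H. has_isolated_vertex (G_verts k) H})"
    unfolding random_subgraph_def by (simp add: measure_map_pmf)
  also have "\<dots> \<le> measure_pmf.prob ?P (\<Union>v\<in>G_verts k. ?A v)"
    by (rule measure_pmf.finite_measure_mono[OF sub]) simp
  also have "\<dots> \<le> (\<Sum>v\<in>G_verts k. measure_pmf.prob ?P (?A v))"
    by (rule measure_pmf.finite_measure_subadditive_finite) (auto simp: finite_G_verts)
  also have "\<dots> = (\<Sum>v\<in>G_verts k. (1 - p)^k)"
  proof (rule sum.cong[OF refl])
    fix v assume v: "v \<in> G_verts k"
    show "measure_pmf.prob ?P (?A v) = (1 - p)^k"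
      using prob_const[OF finite_G_edges _ assms, of "S v" k False] S[OF v] by simp
  qed
  also have "\<dots> = real (card (G_verts k)) * (1 - p)^k" by simp
  finally show ?thesis .
qed



lemma kg2: "real k * ((2 * real k ^ 2 + 2) powr (-1/4))^2 \<le> 1"
proof -
  define x where "x = 2 * real k ^ 2 + 2"
  have "0 \<le> 2 * real k ^ 2" by simp
  then have x: "x > 0" unfolding x_def by linarith
  have "(x powr (-1/4))^2 = x powr (of_nat 2 * (-1/4))"
    by (rule powr_power) (use x in simp)
  also have "(of_nat 2 * (-1/4) :: real) = - (1/2)" by simp
  also have "x powr (- (1/2)) = inverse (x powr (1/2))" by (rule powr_minus)
  also have "x powr (1/2) = sqrt x" using x by (intro powr_half_sqrt) simp
  also have "inverse (sqrt x) = 1 / sqrt x" by (simp add: divide_inverse)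
  finally have eq: "(x powr (-1/4))^2 = 1 / sqrt x" .
  have "real k = sqrt (real k ^ 2)" by simp
  also have "\<dots> \<le> sqrt x" unfolding x_def by (rule real_sqrt_le_mono) simp
  finally have "real k \<le> sqrt x" .
  then have "real k / sqrt x \<le> 1" using x by simp
  then show ?thesis unfolding eq x_def[symmetric] by simp
qed

lemma part1:
  fixes p :: "nat \<Rightarrow> real"
  assumes p01: "\<forall>k. 0 \<le> p k \<and> p k \<le> 1"
    and po: "p \<in> o(\<lambda>k. (2 * real k ^ 2 + 2) powr (-1/4))"
  shows "(\<lambda>k. measure_pmf.prob (random_subgraph (G_edges k) (p k))
                {H. \<not> has_perfect_matching (G_verts k) H}) \<longlonglongrightarrow> 1"
proof -
  have lim0: "(\<lambda>k. real k * p k ^ 2) \<longlonglongrightarrow> 0"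
  proof (rule tendstoI)
    fix e :: real assume e: "e > 0"
    define c where "c = sqrt (e/2)"
    have c: "c > 0" using e unfolding c_def by simp
    have c2: "c^2 = e/2" using e unfolding c_def by simp
    have "eventually (\<lambda>k. norm (p k) \<le> c * norm ((2 * real k ^ 2 + 2) powr (-1/4))) sequentially"
      using landau_o.smallD[OF po c] by simp
    then show "eventually (\<lambda>k. dist (real k * p k ^ 2) 0 < e) sequentially"
    proof (rule eventually_mono)
      fix k assume h: "norm (p k) \<le> c * norm ((2 * real k ^ 2 + 2) powr (-1/4))"
      define g where "g = (2 * real k ^ 2 + 2) powr (-1/4)"
      have g: "g \<ge> 0" unfolding g_def by simp
      have pk: "0 \<le> p k" using p01 by simp
      have "p k \<le> c * g" using h pk g unfolding g_def by simp
      then have "p k ^ 2 \<le> (c * g)^2" using pk by (rule power_mono)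
      then have "real k * p k ^ 2 \<le> real k * (c^2 * g^2)" by (simp add: power_mult_distrib mult_left_mono)
      also have "\<dots> = c^2 * (real k * g^2)" by simp
      also have "\<dots> \<le> c^2 * 1" using kg2[of k] unfolding g_def[symmetric] by (intro mult_left_mono) auto
      finally have "real k * p k ^ 2 \<le> e/2" using c2 by simp
      moreover have "0 \<le> real k * p k ^ 2" by simp
      ultimately show "dist (real k * p k ^ 2) 0 < e" using e by simp
    qed
  qed
  have lo: "1 - real k * p k ^ 2 \<le> measure_pmf.prob (random_subgraph (G_edges k) (p k))
                {H. \<not> has_perfect_matching (G_verts k) H}" for k
  proof -
    have "{H. \<not> has_perfect_matching (G_verts k) H} = UNIV - {H. has_perfect_matching (G_verts k) H}" by auto
    then have "measure_pmf.prob (random_subgraph (G_edges k) (p k)) {H. \<not> has_perfect_matching (G_verts k) H}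
       = 1 - measure_pmf.prob (random_subgraph (G_edges k) (p k)) {H. has_perfect_matching (G_verts k) H}"
      using measure_pmf.prob_compl[of "{H. has_perfect_matching (G_verts k) H}"] by simp
    then show ?thesis using pm_bound[of "p k" k] p01 by simp
  qed
  have l1: "(\<lambda>k. 1 - real k * p k ^ 2) \<longlonglongrightarrow> 1"
    using tendsto_diff[OF tendsto_const lim0, of 1] by simp
  show ?thesis
    apply (rule tendsto_sandwich[of "\<lambda>k. 1 - real k * p k ^ 2" _ _ "\<lambda>_. 1", OF _ _ l1 tendsto_const])
    by (intro always_eventually allI lo measure_pmf.prob_le_1)+
qed


lemma iso_step:
  fixes q :: real and k :: nat
  assumes k: "k \<ge> 1" and q01: "0 \<le> q" "q \<le> 1"
    and qb: "4 * (ln (2 * real k ^ 2 + 2) / sqrt (2 * real k ^ 2 + 2)) \<le> q"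
  shows "real (card (G_verts k)) * (1 - q)^k \<le> 1 / (2 * real k ^ 2 + 2)"
proof -
  define n where "n = 2 * real k ^ 2 + 2"
  have "0 \<le> 2 * real k ^ 2" by simp
  then have n1: "n \<ge> 1" unfolding n_def by linarith
  then have npos: "n > 0" by simp
  define L where "L = ln n"
  have L0: "L \<ge> 0" unfolding L_def using n1 by simp
  have sq: "sqrt n > 0" using npos by simp
  have kk: "real k \<ge> 1" using k by simp
  have k2: "1 \<le> real k ^ 2" using kk by (rule one_le_power)
  have "n \<le> (2 * real k)^2" unfolding n_def using k2 by (simp add: power_mult_distrib)
  then have "sqrt n \<le> sqrt ((2 * real k)^2)" by (rule real_sqrt_le_mono)
  also have "sqrt ((2 * real k)^2) = 2 * real k" by (subst real_sqrt_abs) simp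
  finally have sn: "sqrt n \<le> 2 * real k" .
  have qb': "4 * L / sqrt n \<le> q" using qb unfolding L_def n_def by simp
  have "2 * L * sqrt n \<le> 2 * L * (2 * real k)" using sn L0 by (intro mult_left_mono) auto
  also have "2 * L * (2 * real k) = 4 * L * real k" by simp
  finally have "2 * L * sqrt n \<le> 4 * L * real k" .
  then have "2 * L \<le> 4 * L * real k / sqrt n" by (subst pos_le_divide_eq[OF sq])
  also have "4 * L * real k / sqrt n = (4 * L / sqrt n) * real k" by simp
  also have "\<dots> \<le> q * real k" using qb' by (intro mult_right_mono) auto
  finally have qk: "2 * L \<le> q * real k" .
  have "(1 - q)^k \<le> exp (-q) ^ k"
    using q01 exp_ge_add_one_self[of "-q"] by (intro power_mono) auto
  also have "\<dots> = exp (real k * (-q))" by (rule exp_of_nat_mult[symmetric])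
  also have "exp (real k * (-q)) = exp (- (q * real k))" by simp
  also have "\<dots> \<le> exp (- (2 * L))" using qk by simp
  also have "exp (- (2 * L)) = 1 / (n * n)"
  proof -
    have "exp (- (2 * L)) = inverse (exp (2 * L))" by (rule exp_minus)
    also have "2 * L = L + L" by (rule mult_2)
    also have "exp (L + L) = exp L * exp L" by (rule exp_add)
    also have "exp L = n" unfolding L_def using npos by simp
    finally show ?thesis by (simp add: divide_inverse)
  qed
  finally have b: "(1 - q)^k \<le> 1 / (n * n)" .
  have c: "real (card (G_verts k)) \<le> n" unfolding n_def by (rule card_G_verts)
  have "real (card (G_verts k)) * (1 - q)^k \<le> n * (1 / (n * n))"
    using b c q01 by (intro mult_mono) auto
  also have "\<dots> = 1 / n" using npos by simp
  finally show ?thesis unfolding n_def .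
qed


lemma inv_n_lim: "(\<lambda>k. 1 / (2 * real k ^ 2 + 2)) \<longlonglongrightarrow> 0"
proof (rule tendsto_sandwich[of "\<lambda>_. 0" _ _ "\<lambda>k. inverse (real (Suc k))"])
  show "eventually (\<lambda>k. (0::real) \<le> 1 / (2 * real k ^ 2 + 2)) sequentially"
    by (intro always_eventually allI) (simp add: add_nonneg_nonneg)
  show "eventually (\<lambda>k. 1 / (2 * real k ^ 2 + 2) \<le> inverse (real (Suc k))) sequentially"
  proof (intro always_eventually allI)
    fix k :: nat
    have "real k \<le> real k ^ 2"
      by (cases k) (auto simp: power2_eq_square)
    then have le: "real (Suc k) \<le> 2 * real k ^ 2 + 2" by (simp only: of_nat_Suc)
    have "0 < real (Suc k)" by simp
    then show "1 / (2 * real k ^ 2 + 2) \<le> inverse (real (Suc k))"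
      using le by (simp add: divide_inverse le_imp_inverse_le)
  qed
  show "(\<lambda>_. 0::real) \<longlonglongrightarrow> 0" by simp
  show "(\<lambda>k. inverse (real (Suc k))) \<longlonglongrightarrow> 0" by (rule LIMSEQ_inverse_real_of_nat)
qed

lemma part2:
  fixes p :: "nat \<Rightarrow> real"
  assumes p01: "\<forall>k. 0 \<le> p k \<and> p k \<le> 1"
    and po: "p \<in> \<omega>(\<lambda>k. ln (2 * real k ^ 2 + 2) / sqrt (2 * real k ^ 2 + 2))"
  shows "(\<lambda>k. measure_pmf.prob (random_subgraph (G_edges k) (p k))
                {H. \<not> has_isolated_vertex (G_verts k) H}) \<longlonglongrightarrow> 1"
proof -
  have ev: "eventually (\<lambda>k. norm (p k) \<ge> 4 * norm (ln (2 * real k ^ 2 + 2) / sqrt (2 * real k ^ 2 + 2))) sequentially"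
    using landau_omega.smallD[OF po, of 4] by simp
  have ev1: "eventually (\<lambda>k. k \<ge> (1::nat)) sequentially" by (rule eventually_ge_at_top)
  have lo: "eventually (\<lambda>k. 1 - 1 / (2 * real k ^ 2 + 2) \<le> measure_pmf.prob (random_subgraph (G_edges k) (p k))
                {H. \<not> has_isolated_vertex (G_verts k) H}) sequentially"
    using ev ev1
  proof (rule eventually_elim2)
    fix k :: nat
    assume h: "norm (p k) \<ge> 4 * norm (ln (2 * real k ^ 2 + 2) / sqrt (2 * real k ^ 2 + 2))" and k: "k \<ge> 1"
    have pk: "0 \<le> p k" "p k \<le> 1" using p01 by auto
    have "0 \<le> 2 * real k ^ 2" by simp
    then have n1: "1 \<le> 2 * real k ^ 2 + 2" by linarith
    then have "0 \<le> ln (2 * real k ^ 2 + 2) / sqrt (2 * real k ^ 2 + 2)" by simp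
    then have qb: "4 * (ln (2 * real k ^ 2 + 2) / sqrt (2 * real k ^ 2 + 2)) \<le> p k"
      using h pk by simp
    have "{H. \<not> has_isolated_vertex (G_verts k) H} = UNIV - {H. has_isolated_vertex (G_verts k) H}" by auto
    then have "measure_pmf.prob (random_subgraph (G_edges k) (p k)) {H. \<not> has_isolated_vertex (G_verts k) H}
       = 1 - measure_pmf.prob (random_subgraph (G_edges k) (p k)) {H. has_isolated_vertex (G_verts k) H}"
      using measure_pmf.prob_compl[of "{H. has_isolated_vertex (G_verts k) H}"] by simp
    moreover have "measure_pmf.prob (random_subgraph (G_edges k) (p k)) {H. has_isolated_vertex (G_verts k) H}
        \<le> 1 / (2 * real k ^ 2 + 2)"
      using iso_bound[OF pk, of k] iso_step[OF k pk qb] by linarith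
    ultimately show "1 - 1 / (2 * real k ^ 2 + 2) \<le> measure_pmf.prob (random_subgraph (G_edges k) (p k))
                {H. \<not> has_isolated_vertex (G_verts k) H}" by linarith
  qed
  have l1: "(\<lambda>k. 1 - 1 / (2 * real k ^ 2 + 2)) \<longlonglongrightarrow> 1"
    using tendsto_diff[OF tendsto_const inv_n_lim, of 1] by simp
  show ?thesis
    apply (rule tendsto_sandwich[of "\<lambda>k. 1 - 1 / (2 * real k ^ 2 + 2)" _ _ "\<lambda>_. 1", OF lo _ l1 tendsto_const])
    by (intro always_eventually allI measure_pmf.prob_le_1)
qed

theorem propositionA2:
  fixes n :: "nat \<Rightarrow> real"
  defines "n \<equiv> (\<lambda>k. 2 * real k ^ 2 + 2)"
  shows
    "(\<forall>p :: nat \<Rightarrow> real. (\<forall>k. 0 \<le> p k \<and> p k \<le> 1) \<longrightarrow>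
        p \<in> o(\<lambda>k. n k powr (-1/4)) \<longrightarrow>
        (\<lambda>k. measure_pmf.prob (random_subgraph (G_edges k) (p k))
                {H. \<not> has_perfect_matching (G_verts k) H}) \<longlonglongrightarrow> 1)
   \<and> (\<forall>p :: nat \<Rightarrow> real. (\<forall>k. 0 \<le> p k \<and> p k \<le> 1) \<longrightarrow>
        p \<in> \<omega>(\<lambda>k. ln (n k) / sqrt (n k)) \<longrightarrow>
        (\<lambda>k. measure_pmf.prob (random_subgraph (G_edges k) (p k))
                {H. \<not> has_isolated_vertex (G_verts k) H}) \<longlonglongrightarrow> 1)"
  unfolding n_def using part1 part2 by blast

end
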